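(* Assume the General Content Request Model with the $R$-rarity condition for $R=\|\mathbf L\|_\infty$, and fix constant TTL vectors $\boldsymbol\theta\preccurlyeq\mathbf L$, $\boldsymbol\theta^s\preccurlyeq\mathbf L$. For f-TTL with these fixed TTLs, $$\lim_{n\to\infty}\frac1n\sum_{l=1}^n\mathbb 1\big(c(l)\notin\mathcal K,\ Y(l)=1\big)=0\quad\text{almost surely},$$ i.e. the fraction of requests that are hits on rare objects vanishes almost surely.
   Context: Standing model (General Content Request Model). Finitely many types $t\in[T]$; each type has a finite set $\mathcal K_t$ of recurrent objects and a countable set $\mathcal R_t$ of rare objects; $\mathcal K=\bigcup_t\mathcal K_t$, $K=|\mathcal K|$, recurrent objects labeled $1,\dots,K$. Requests arrive at times $A(l)$, $A(0)=0$, with i.i.d. inter-arrival times independent of labels, having a density that is absolutely continuous w.r.t. Lebesgue measure, with connected support and finite nonzero mean. A Markov chain $Z(l)$ on $\{1,\dots,K+T\}$, irreducible with $P(c,c)>0$ for all $c$, determines labels: $Z(l)=k\le K$ means request $l$ is for recurrent object $k$; $Z(l)=K+t$ means some rare object of type $t$ (arbitrary subject to the rarity condition). $c(l)$ is the object of request $l$. $X_{pre}(l)=\min\{A(l)-A(l'):l'<l,c(l')=c(l)\}$ ($\min\emptyset=\infty$), $\beta_t(l;R)=\mathbb 1(c(l)\in\mathcal R_t,X_{pre}(l)<R)$; $R$-rarity condition: for every $t$ and every $N_m$ with $N_m/\sqrt m\to\infty$, $\frac1{N_m}\sum_{l=m}^{m+N_m}\beta_t(l;R)\to0$ a.s. f-TTL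 with fixed TTLs $(\boldsymbol\theta,\boldsymbol\theta^s)$: deep cache, shallow cache, shadow cache (metadata only). Each object $c$ has timers $(\psi^0_c,\psi^1_c,\psi^2_c)$ decreasing at unit rate (floored at $0$); $c$ is in the deep cache while $\psi^0_c>0$, in the shallow cache while $\psi^1_c>0$, its metadata in the shadow cache while $\psi^2_c>0$. A request for $c$ of type $t$ is a hit ($Y(l)=1$) if $c$ is in the deep or shallow cache, a virtual hit if not but its metadata is in the shadow cache, and a miss otherwise ($Y(l)=0$ for virtual hits and misses); on a hit or virtual hit the timers are set to $(\theta_t,0,0)$, on a miss to $(0,\theta^s_t,\theta_t)$. *)

theory Defs
  imports "HOL-Probability.Probability"
begin

text \<open>A timer triple (psi0, psi1, psi2): deep cache, shallow cache, shadow cache.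
  Timers decrease at unit rate, floored at 0.\<close>

definition timer_decay :: "real \<Rightarrow> real \<times> real \<times> real \<Rightarrow> real \<times> real \<times> real" where
  "timer_decay d psi =
     (max 0 (fst psi - d), max 0 (fst (snd psi) - d), max 0 (snd (snd psi) - d))"

definition timer_hit :: "real \<times> real \<times> real \<Rightarrow> bool" where
  "timer_hit psi \<longleftrightarrow> fst psi > 0 \<or> fst (snd psi) > 0"

definition timer_vhit :: "real \<times> real \<times> real \<Rightarrow> bool" where
  "timer_vhit psi \<longleftrightarrow> \<not> timer_hit psi \<and> snd (snd psi) > 0"

definition timer_update :: "real \<Rightarrow> real \<Rightarrow> real \<times> real \<times> real \<Rightarrow> real \<times> real \<times> real" where
  "timer_update th ths psi =
     (if timer_hit psi \<or> timer_vhit psi then (th, 0, 0) else (0, ths, th))"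

text \<open>Timers of all objects at time A l, just before request l is processed.\<close>

primrec fttl_pre ::
  "(nat \<Rightarrow> real) \<Rightarrow> (nat \<Rightarrow> 'obj) \<Rightarrow> ('obj \<Rightarrow> nat) \<Rightarrow> (nat \<Rightarrow> real) \<Rightarrow> (nat \<Rightarrow> real)
   \<Rightarrow> nat \<Rightarrow> 'obj \<Rightarrow> real \<times> real \<times> real" where
  "fttl_pre A c otype theta thetas 0 = (\<lambda>_. (0, 0, 0))"
| "fttl_pre A c otype theta thetas (Suc l) =
     (\<lambda>x. timer_decay (A (Suc l) - A l)
            (if x = c l then timer_update (theta (otype x)) (thetas (otype x))
                               (fttl_pre A c otype theta thetas l x)
             else fttl_pre A c otype theta thetas l x))"

definition fttl_hit ::
  "(nat \<Rightarrow> real) \<Rightarrow> (nat \<Rightarrow> 'obj) \<Rightarrow> ('obj \<Rightarrow> nat) \<Rightarrow> (nat \<Rightarrow> real) \<Rightarrow> (nat \<Rightarrow> real)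
   \<Rightarrow> nat \<Rightarrow> bool" where
  "fttl_hit A c otype theta thetas l \<longleftrightarrow> timer_hit (fttl_pre A c otype theta thetas l (c l))"

definition X_pre :: "(nat \<Rightarrow> real) \<Rightarrow> (nat \<Rightarrow> 'obj) \<Rightarrow> nat \<Rightarrow> ereal" where
  "X_pre A c l =
     (if \<exists>l'<l. c l' = c l
      then ereal (Min {A l - A l' | l'. l' < l \<and> c l' = c l})
      else \<infinity>)"

definition beta_rare :: "('obj set) \<Rightarrow> (nat \<Rightarrow> real) \<Rightarrow> (nat \<Rightarrow> 'obj) \<Rightarrow> real \<Rightarrow> nat \<Rightarrow> real" where
  "beta_rare Rt A c R l = (if c l \<in> Rt \<and> X_pre A c l < ereal R then 1 else 0)"

definition rarity_condition ::
  "'w measure \<Rightarrow> nat \<Rightarrow> (nat \<Rightarrow> 'obj set) \<Rightarrow> ('w \<Rightarrow> nat \<Rightarrow> real) \<Rightarrow> ('w \<Rightarrow> nat \<Rightarrow> 'obj)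
   \<Rightarrow> real \<Rightarrow> bool" where
  "rarity_condition M T Rare A c R \<longleftrightarrow>
     (\<forall>t\<in>{1..T}. \<forall>N :: nat \<Rightarrow> nat.
        filterlim (\<lambda>m. real (N m) / sqrt (real m)) at_top sequentially \<longrightarrow>
        (AE \<omega> in M. (\<lambda>m. (1 / real (N m)) * (\<Sum>l = m..m + N m. beta_rare (Rare t) (A \<omega>) (c \<omega>) R l))
                      \<longlonglongrightarrow> 0))"

primrec mat_pow :: "nat set \<Rightarrow> (nat \<Rightarrow> nat \<Rightarrow> real) \<Rightarrow> nat \<Rightarrow> nat \<Rightarrow> nat \<Rightarrow> real" where
  "mat_pow S P 0 i j = (if i = j then 1 else 0)"
| "mat_pow S P (Suc n) i j = (\<Sum>k\<in>S. mat_pow S P n i k * P k j)"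

definition gcrm ::
  "'w measure \<Rightarrow> nat \<Rightarrow> (nat \<Rightarrow> 'obj set) \<Rightarrow> (nat \<Rightarrow> 'obj set) \<Rightarrow> ('obj \<Rightarrow> nat)
   \<Rightarrow> ('obj \<Rightarrow> nat) \<Rightarrow> ('w \<Rightarrow> nat \<Rightarrow> real) \<Rightarrow> ('w \<Rightarrow> nat \<Rightarrow> nat) \<Rightarrow> ('w \<Rightarrow> nat \<Rightarrow> 'obj) \<Rightarrow> bool"
  where
  "gcrm M T Krec Rare otype lab A Z c \<longleftrightarrow>
     (let Kall = (\<Union>t\<in>{1..T}. Krec t); K = card Kall; S = {1..K+T};
          tau = (\<lambda>l \<omega>. A \<omega> (Suc l) - A \<omega> l) in
     prob_space M \<and> T \<ge> 1
     \<comment> \<open>objects: finitely many recurrent, countably many rare ones per type\<close>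
     \<and> (\<forall>t\<in>{1..T}. finite (Krec t) \<and> countable (Rare t))
     \<and> (\<forall>t\<in>{1..T}. \<forall>x\<in>Krec t \<union> Rare t. otype x = t)
     \<and> (\<forall>t\<in>{1..T}. \<forall>t'\<in>{1..T}. Krec t \<inter> Rare t' = {})
     \<and> bij_betw lab Kall {1..K}
     \<comment> \<open>arrival times: A 0 = 0, i.i.d. nonnegative inter-arrival times with a density,
         connected support, finite nonzero mean, independent of the labels\<close>
     \<and> (\<forall>\<omega>\<in>space M. A \<omega> 0 = 0)
     \<and> prob_space.indep_vars M (\<lambda>_. borel) tau UNIV
     \<and> (\<forall>l. distr M borel (tau l) = distr M borel (tau 0))
     \<and> (AE \<omega> in M. \<forall>l. tau l \<omega> \<ge> 0)
     \<and> (\<exists>f. distributed M lborel (tau 0) f \<and> connected {x. f x > 0})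
     \<and> integrable M (tau 0) \<and> (\<integral>\<omega>. tau 0 \<omega> \<partial>M) \<noteq> 0
     \<and> (\<lambda>\<omega> l. tau l \<omega>) \<in> measurable M (Pi\<^sub>M UNIV (\<lambda>_. borel))
     \<and> (\<lambda>\<omega> l. c \<omega> l) \<in> measurable M (Pi\<^sub>M UNIV (\<lambda>_. count_space UNIV))
     \<and> (\<forall>B\<in>sets (Pi\<^sub>M UNIV (\<lambda>_. borel)). \<forall>C\<in>sets (Pi\<^sub>M UNIV (\<lambda>_. count_space UNIV)).
          measure M {\<omega>\<in>space M. (\<lambda>l. tau l \<omega>) \<in> B \<and> c \<omega> \<in> C}
          = measure M {\<omega>\<in>space M. (\<lambda>l. tau l \<omega>) \<in> B} * measure M {\<omega>\<in>space M. c \<omega> \<in> C})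
     \<comment> \<open>labels: a time-homogeneous Markov chain on S, irreducible, P(s,s) > 0\<close>
     \<and> (\<forall>l. (\<lambda>\<omega>. Z \<omega> l) \<in> measurable M (count_space UNIV))
     \<and> (\<forall>\<omega>\<in>space M. \<forall>l. Z \<omega> l \<in> S)
     \<and> (\<exists>P :: nat \<Rightarrow> nat \<Rightarrow> real.
          (\<forall>i\<in>S. \<forall>j\<in>S. P i j \<ge> 0) \<and> (\<forall>i\<in>S. (\<Sum>j\<in>S. P i j) = 1)
          \<and> (\<forall>i\<in>S. \<forall>j\<in>S. \<exists>n>0. mat_pow S P n i j > 0)
          \<and> (\<forall>i\<in>S. P i i > 0)
          \<and> (\<forall>l (xs :: nat \<Rightarrow> nat) s'.
               measure M {\<omega>\<in>space M. (\<forall>i\<le>l. Z \<omega> i = xs i) \<and> Z \<omega> (Suc l) = s'}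
               = measure M {\<omega>\<in>space M. \<forall>i\<le>l. Z \<omega> i = xs i} * P (xs l) s'))
     \<comment> \<open>the chain determines the labels\<close>
     \<and> (\<forall>\<omega>\<in>space M. \<forall>l. Z \<omega> l \<le> K \<longrightarrow> c \<omega> l \<in> Kall \<and> lab (c \<omega> l) = Z \<omega> l)
     \<and> (\<forall>\<omega>\<in>space M. \<forall>l. \<forall>t\<in>{1..T}. Z \<omega> l = K + t \<longrightarrow> c \<omega> l \<in> Rare t))"

end

theory Submission imports Defs "HOL-Real_Asymp.Real_Asymp" begin

lemma block_bound:
  fixes b :: "nat \<Rightarrow> real" and eps C :: real
  assumes nn: "\<And>l. b l \<ge> 0" and m0: "m0 \<ge> 1"
    and W: "\<And>m. m \<ge> m0 \<Longrightarrow> (\<Sum>l=m..m+m. b l) \<le> eps * real m"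
    and C: "C = (\<Sum>l=1..2*m0. b l)"
  shows "(\<Sum>l=1..n. b l) \<le> C + eps * real n"
proof (induction n rule: less_induct)
  case (less n)
  have eps: "eps \<ge> 0"
  proof -
    have "0 \<le> (\<Sum>l=m0..m0+m0. b l)" by (simp add: nn sum_nonneg)
    also have "\<dots> \<le> eps * real m0" using W by simp
    finally show ?thesis using m0 by (simp add: zero_le_mult_iff)
  qed
  show ?case
  proof (cases "n \<le> 2*m0")
    case True
    have "(\<Sum>l=1..n. b l) \<le> C" unfolding C
      by (rule sum_mono2) (use True nn in auto)
    then show ?thesis using eps by (smt (verit) of_nat_0_le_iff mult_nonneg_nonneg)
  next
    case False
    define m where "m = (n+1) div 2"
    have mm: "m \<ge> m0" "m \<ge> 1" "m + m \<ge> n" "m \<le> n" "2*m \<le> n+1" using False m0 unfolding m_def by auto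
    have split: "{1..n} = {1..m-1} \<union> {m..n}" using mm by auto
    have "(\<Sum>l=1..n. b l) = (\<Sum>l=1..m-1. b l) + (\<Sum>l=m..n. b l)"
      unfolding split by (rule sum.union_disjoint) auto
    also have "(\<Sum>l=m..n. b l) \<le> (\<Sum>l=m..m+m. b l)"
      by (rule sum_mono2) (use mm nn in auto)
    also have "\<dots> \<le> eps * real m" using W mm by simp
    also have "(\<Sum>l=1..m-1. b l) \<le> C + eps * real (m-1)" using less.IH[of "m-1"] mm by simp
    finally have "(\<Sum>l=1..n. b l) \<le> C + eps * (real (m-1) + real m)" by (simp add: algebra_simps)
    also have "real (m-1) + real m \<le> real n" using mm by linarith
    finally show ?thesis using eps by (smt (verit) mult_left_mono)
  qed
qed

lemma cesaro_from_blocks: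
  fixes b :: "nat \<Rightarrow> real"
  assumes nn: "\<And>l. b l \<ge> 0"
    and W: "(\<lambda>m. (1 / real m) * (\<Sum>l=m..m+m. b l)) \<longlonglongrightarrow> 0"
  shows "(\<lambda>n. (1 / real n) * (\<Sum>l=1..n. b l)) \<longlonglongrightarrow> 0"
proof (rule LIMSEQ_I)
  fix r :: real assume r: "0 < r"
  obtain m1 where m1: "\<And>m. m \<ge> m1 \<Longrightarrow> norm ((1 / real m) * (\<Sum>l=m..m+m. b l) - 0) < r/2"
    using LIMSEQ_D[OF W, of "r/2"] r by auto
  define m0 where "m0 = max 1 m1"
  define C where "C = (\<Sum>l=1..2*m0. b l)"
  have Wb: "(\<Sum>l=m..m+m. b l) \<le> r/2 * real m" if "m \<ge> m0" for m
  proof -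
    have "m \<ge> m1" "m \<ge> 1" using that m0_def by auto
    have s0: "0 \<le> (\<Sum>l=m..m+m. b l)" by (simp add: nn sum_nonneg)
    hence "(1 / real m) * (\<Sum>l=m..m+m. b l) < r/2" using m1[of m] \<open>m \<ge> m1\<close> by simp
    thus ?thesis using \<open>m\<ge>1\<close> by (simp add: field_simps)
  qed
  have bnd: "(\<Sum>l=1..n. b l) \<le> C + r/2 * real n" for n
    by (rule block_bound[OF nn _ Wb C_def]) (auto simp: m0_def)
  have C0: "C \<ge> 0" unfolding C_def by (simp add: nn sum_nonneg)
  obtain n0 :: nat where n0: "real n0 > 2 * C / r" using reals_Archimedean2 by blast
  show "\<exists>no. \<forall>n\<ge>no. norm ((1 / real n) * (\<Sum>l=1..n. b l) - 0) < r"
  proof (intro exI allI impI)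
    fix n assume n: "n \<ge> Suc n0"
    hence npos: "real n > 0" by simp
    have "2*C/r < real n" using n n0 by linarith
    hence Cn: "C < r/2 * real n" using r by (simp add: field_simps)
    have s0: "0 \<le> (\<Sum>l=1..n. b l)" by (simp add: nn sum_nonneg)
    have "(\<Sum>l=1..n. b l) < r * real n" using bnd[of n] Cn by linarith
    hence "(1 / real n) * (\<Sum>l=1..n. b l) < r" using npos by (simp add: field_simps)
    thus "norm ((1 / real n) * (\<Sum>l=1..n. b l) - 0) < r" using s0 npos by simp
  qed
qed

definition goodc :: "(nat \<Rightarrow> real) \<Rightarrow> (nat \<Rightarrow> 'obj) \<Rightarrow> real \<Rightarrow> nat \<Rightarrow> 'obj \<Rightarrow> real \<Rightarrow> bool" where
  "goodc A c V l x y \<longleftrightarrow> y \<le> 0 \<or> (\<exists>l'<l. c l' = x \<and> y + (A l - A l') \<le> V)"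

lemma goodc_step_other:
  assumes "goodc A c V l x u" "A l \<le> A (Suc l)"
  shows "goodc A c V (Suc l) x (max 0 (u - (A (Suc l) - A l)))"
  using assms unfolding goodc_def
  by (auto simp: max_def less_Suc_eq)

lemma goodc_step_self:
  assumes "u \<le> V" "A l \<le> A (Suc l)" "c l = x"
  shows "goodc A c V (Suc l) x (max 0 (u - (A (Suc l) - A l)))"
  using assms unfolding goodc_def
  by (cases "u - (A (Suc l) - A l) \<le> 0") (auto simp: max_def intro!: exI[of _ l])

lemma goodc_zero[simp]: "goodc A c V l x 0" by (simp add: goodc_def)

lemma timers_good:
  assumes mono: "\<And>l. A l \<le> A (Suc l)"
  shows "let p = fttl_pre A c otype theta thetas l x;
             V = max 0 (max (theta (otype x)) (thetas (otype x))) in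
         goodc A c V l x (fst p) \<and> goodc A c V l x (fst (snd p)) \<and> goodc A c V l x (snd (snd p))"
proof (induction l arbitrary: x)
  case 0
  then show ?case by (simp add: goodc_def)
next
  case (Suc l)
  let ?V = "max 0 (max (theta (otype x)) (thetas (otype x)))"
  show ?case
  proof (cases "x = c l")
    case True
    define p where "p = fttl_pre A c otype theta thetas l x"
    define V where "V = max 0 (max (theta (otype x)) (thetas (otype x)))"
    define u where "u = timer_update (theta (otype x)) (thetas (otype x)) p"
    have u: "fst u \<le> V \<and> fst (snd u) \<le> V \<and> snd (snd u) \<le> V"
      unfolding u_def timer_update_def V_def by auto
    have "fttl_pre A c otype theta thetas (Suc l) x = timer_decay (A (Suc l) - A l) u"
      using True by (simp add: u_def p_def)
    then show ?thesis unfolding Let_def V_def[symmetric] timer_decay_def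
      using u goodc_step_self[where A=A and l=l and c=c and x=x, OF _ mono[of l] True[symmetric]] by simp
  next
    case False
    then show ?thesis using Suc.IH[of x]
      by (simp add: Let_def timer_decay_def goodc_step_other mono)
  qed
qed

lemma hit_imp_close:
  assumes mono: "\<And>l. A l \<le> A (Suc l)"
    and hit: "fttl_hit A c otype theta thetas l"
  shows "\<exists>l'<l. c l' = c l \<and> A l - A l' < max 0 (max (theta (otype (c l))) (thetas (otype (c l))))"
proof -
  let ?p = "fttl_pre A c otype theta thetas l (c l)"
  let ?V = "max 0 (max (theta (otype (c l))) (thetas (otype (c l))))"
  have g: "goodc A c ?V l (c l) (fst ?p)" "goodc A c ?V l (c l) (fst (snd ?p))"
    using timers_good[where A=A, OF mono, of c otype theta thetas l "c l"] by (simp_all add: Let_def)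
  from hit have "fst ?p > 0 \<or> fst (snd ?p) > 0" by (simp add: fttl_hit_def timer_hit_def)
  then show ?thesis using g unfolding goodc_def by (smt (verit))
qed

lemma hit_imp_Xpre:
  assumes mono: "\<And>l. A l \<le> A (Suc l)"
    and hit: "fttl_hit A c otype theta thetas l"
    and V: "max 0 (max (theta (otype (c l))) (thetas (otype (c l)))) \<le> R"
  shows "X_pre A c l < ereal R"
proof -
  obtain l' where l': "l' < l" "c l' = c l" "A l - A l' < R"
    using hit_imp_close[OF mono hit] V by force
  have fin: "finite {A l - A l' | l'. l' < l \<and> c l' = c l}" by simp
  have "Min {A l - A l' | l'. l' < l \<and> c l' = c l} \<le> A l - A l'"
    by (rule Min_le[OF fin]) (use l' in blast)
  then show ?thesis using l' unfolding X_pre_def by auto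
qed

theorem mainTheorem5:
  fixes M :: "'w measure" and T :: nat
    and Krec Rare :: "nat \<Rightarrow> 'obj set" and otype lab :: "'obj \<Rightarrow> nat"
    and A :: "'w \<Rightarrow> nat \<Rightarrow> real" and Z :: "'w \<Rightarrow> nat \<Rightarrow> nat" and c :: "'w \<Rightarrow> nat \<Rightarrow> 'obj"
    and L theta thetas :: "nat \<Rightarrow> real"
  assumes model: "gcrm M T Krec Rare otype lab A Z c"
    and rare: "rarity_condition M T Rare A c (Max {\<bar>L t\<bar> | t. t \<in> {1..T}})"
    and ttl_nonneg: "\<forall>t\<in>{1..T}. 0 \<le> theta t \<and> 0 \<le> thetas t"
    and ttl_le: "\<forall>t\<in>{1..T}. theta t \<le> L t \<and> thetas t \<le> L t"
  shows "AE \<omega> in M.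
           (\<lambda>n. (1 / real n) * (\<Sum>l = 1..n.
               (if c \<omega> l \<notin> (\<Union>t\<in>{1..T}. Krec t) \<and> fttl_hit (A \<omega>) (c \<omega>) otype theta thetas l
                then 1 else 0 :: real)))
           \<longlonglongrightarrow> 0"
proof -
  define R where "R = Max {\<bar>L t\<bar> | t. t \<in> {1..T}}"
  define Kall where "Kall = (\<Union>t\<in>{1..T}. Krec t)"
  define K where "K = card Kall"
  note G = model[unfolded gcrm_def Let_def, folded Kall_def, folded K_def]
  have T1: "T \<ge> 1" using G by (elim conjE) assumption
  have otyp: "\<forall>t\<in>{1..T}. \<forall>x\<in>Krec t \<union> Rare t. otype x = t" using G by (elim conjE) assumption
  have nonneg: "AE \<omega> in M. \<forall>l. A \<omega> (Suc l) - A \<omega> l \<ge> 0" using G by (elim conjE) assumption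
  have Zin: "\<forall>\<omega>\<in>space M. \<forall>l. Z \<omega> l \<in> {1..K+T}" using G by (elim conjE) assumption
  have Zrec: "\<forall>\<omega>\<in>space M. \<forall>l. Z \<omega> l \<le> K \<longrightarrow> c \<omega> l \<in> Kall" using G by (elim conjE) (meson)
  have Zrare: "\<forall>\<omega>\<in>space M. \<forall>l. \<forall>t\<in>{1..T}. Z \<omega> l = K + t \<longrightarrow> c \<omega> l \<in> Rare t"
    using G by (elim conjE) assumption
  have finL: "finite {\<bar>L t\<bar> | t. t \<in> {1..T}}" by simp
  have Rge: "\<bar>L t\<bar> \<le> R" if "t \<in> {1..T}" for t
    unfolding R_def by (rule Max_ge[OF finL]) (use that in blast)
  have VR: "max 0 (max (theta t) (thetas t)) \<le> R" if "t \<in> {1..T}" for t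
    using Rge[OF that] ttl_le that Rge[of 1] T1 by force
  have Nlim: "filterlim (\<lambda>m. real m / sqrt (real m)) at_top sequentially"
    by real_asymp
  have rareAE: "AE \<omega> in M. \<forall>t\<in>{1..T}.
      (\<lambda>m. (1 / real m) * (\<Sum>l = m..m + m. beta_rare (Rare t) (A \<omega>) (c \<omega>) R l)) \<longlonglongrightarrow> 0"
  proof (rule AE_finite_allI)
    fix t assume t: "t \<in> {1..T}"
    show "AE \<omega> in M. (\<lambda>m. (1 / real m) * (\<Sum>l = m..m + m. beta_rare (Rare t) (A \<omega>) (c \<omega>) R l)) \<longlonglongrightarrow> 0"
      using rare t Nlim unfolding rarity_condition_def R_def[symmetric]
      by (elim ballE[where x=t] allE[where x="\<lambda>m. m"]) auto
  qed simp
  show ?thesis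
    using AE_space nonneg rareAE
  proof eventually_elim
    case (elim \<omega>)
    define b where "b l = (\<Sum>t\<in>{1..T}. beta_rare (Rare t) (A \<omega>) (c \<omega>) R l)" for l
    have bet_nn: "0 \<le> beta_rare (Rare t) (A \<omega>) (c \<omega>) R l" for t l
      by (simp add: beta_rare_def)
    have bnn: "\<And>l. b l \<ge> 0" unfolding b_def by (simp add: bet_nn sum_nonneg)
    have W: "(\<lambda>m. (1 / real m) * (\<Sum>l=m..m+m. b l)) \<longlonglongrightarrow> 0"
    proof -
      have eq: "(1 / real m) * (\<Sum>l=m..m+m. b l) =
          (\<Sum>t\<in>{1..T}. (1 / real m) * (\<Sum>l = m..m + m. beta_rare (Rare t) (A \<omega>) (c \<omega>) R l))" for m
        unfolding b_def by (simp add: sum_distrib_left) (rule sum.swap)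
      have "(\<lambda>m. \<Sum>t\<in>{1..T}. (1 / real m) * (\<Sum>l = m..m + m. beta_rare (Rare t) (A \<omega>) (c \<omega>) R l))
            \<longlonglongrightarrow> (\<Sum>t\<in>{1..T}. 0)"
        by (rule tendsto_sum) (use elim(3) in blast)
      then show ?thesis unfolding eq by simp
    qed
    have cb: "(\<lambda>n. (1 / real n) * (\<Sum>l=1..n. b l)) \<longlonglongrightarrow> 0"
      by (rule cesaro_from_blocks[OF bnn W])
    have mono: "\<And>l. A \<omega> l \<le> A \<omega> (Suc l)" using elim(2) by auto
    have ind_le: "(if c \<omega> l \<notin> Kall \<and> fttl_hit (A \<omega>) (c \<omega>) otype theta thetas l then 1 else 0 :: real) \<le> b l" for l
    proof (cases "c \<omega> l \<notin> Kall \<and> fttl_hit (A \<omega>) (c \<omega>) otype theta thetas l")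
      case True
      have z: "Z \<omega> l \<in> {1..K+T}" using Zin elim(1) by blast
      have "\<not> Z \<omega> l \<le> K" using Zrec elim(1) True by blast
      then obtain t where t: "t \<in> {1..T}" "Z \<omega> l = K + t" using z
        by (intro that[of "Z \<omega> l - K"]) auto
      have cr: "c \<omega> l \<in> Rare t" using Zrare elim(1) t by blast
      have ot: "otype (c \<omega> l) = t" using otyp t cr by blast
      have "X_pre (A \<omega>) (c \<omega>) l < ereal R"
        by (rule hit_imp_Xpre[where A="A \<omega>", OF mono]) (use True ot VR t in auto)
      hence "beta_rare (Rare t) (A \<omega>) (c \<omega>) R l = 1" using cr by (simp add: beta_rare_def)
      moreover have "beta_rare (Rare t) (A \<omega>) (c \<omega>) R l \<le> b l"
        unfolding b_def by (rule member_le_sum) (use t bet_nn in auto)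
      ultimately show ?thesis using True by simp
    next
      case False
      then show ?thesis using bnn[of l] by auto
    qed
    show ?case
    proof (rule tendsto_sandwich[OF _ _ tendsto_const cb])
      show "\<forall>\<^sub>F n in sequentially. 0 \<le> (1 / real n) * (\<Sum>l = 1..n.
               (if c \<omega> l \<notin> (\<Union>t\<in>{1..T}. Krec t) \<and> fttl_hit (A \<omega>) (c \<omega>) otype theta thetas l
                then 1 else 0 :: real))"
        by (intro always_eventually allI mult_nonneg_nonneg sum_nonneg) auto
      show "\<forall>\<^sub>F n in sequentially. (1 / real n) * (\<Sum>l = 1..n.
               (if c \<omega> l \<notin> (\<Union>t\<in>{1..T}. Krec t) \<and> fttl_hit (A \<omega>) (c \<omega>) otype theta thetas l
                then 1 else 0 :: real)) \<le> (1 / real n) * (\<Sum>l=1..n. b l)"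
        using ind_le unfolding Kall_def
        by (intro always_eventually allI mult_left_mono sum_mono) auto
    qed
  qed
qed

end
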